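(* Let $\gamma$ be a join-irreducible element of the weak order on $B_n$ with associated signed subset $A$ and associated $m,M$ as described below. Then (i) $\deg(\gamma)=1$ if and only if $|(m,M)\cap(\pm[n])|=0$; and (ii) $\deg(\gamma)=2$ if and only if either $|(m,M)\cap(\pm[n])|=1$ or $(m,M)=(-2,2)$.
   Context: $B_n$: signed permutations of $\pm[n]=\{\pm1,\dots,\pm n\}$ ($x(-i)=-x(i)$), full notation $x_{-n},\dots,x_{-1},x_1,\dots,x_n$; Coxeter generators $S=\{s_0,\dots,s_{n-1}\}$ with $s_0=(-1\ 1)$, $s_i=(i\ i{+}1)(-i{-}1\ {-i})$. Weak order $v\le w$ iff $I(v)\subseteq I(w)$, $I(w)$ the reflections $t$ with $\ell(tw)<\ell(w)$. An element is join-irreducible if it covers exactly one element. A signed subset of $[n]$ is $A\subseteq\pm[n]$ with $\{-i,i\}\not\subseteq A$ for all $i$. Let $-A=\{a:-a\in A\}$, $\pm A=A\cup-A$, complements taken in $\pm[n]$, $m=\min A$, and $M=-m$ if $|A|=n$, otherwise $M=\max(\pm A)^c$. Join-irreducibles of $B_n$ correspond bijectively to signed subsets with $M>m$: the full notation of $\gamma$ lists the elements of $-A$ in increasing order, then those of $(\pm A)^c$ in increasing order, then those of $A$ in increasing order. $(m,M)$ denotes the open real interval. The degree $\deg(\gamma)$ is the smallest $|K|$ over $K\subseteq S$ with $\gamma$ in the subgroup generated by $K$. *)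

theory Defs
  imports Main
begin

definition pm :: "nat \<Rightarrow> int set" where
  "pm n = {i. 1 \<le> \<bar>i\<bar> \<and> \<bar>i\<bar> \<le> int n}"

text \<open>Signed permutations, extended by the identity outside \<plusminus>[n].\<close>
definition Bn :: "nat \<Rightarrow> (int \<Rightarrow> int) set" where
  "Bn n = {x. bij_betw x (pm n) (pm n) \<and> (\<forall>i. x (-i) = - x i) \<and> (\<forall>i. i \<notin> pm n \<longrightarrow> x i = i)}"

text \<open>Coxeter generators: s_0 = (-1 1), s_i = (i i+1)(-i-1 -i) for 1 <= i <= n-1.\<close>
definition gen :: "nat \<Rightarrow> int \<Rightarrow> int" where
  "gen i x = (if i = 0 then (if x = 1 then -1 else if x = -1 then 1 else x)
     else (if x = int i then int i + 1 else if x = int i + 1 then int i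
     else if x = - int i then - int i - 1 else if x = - int i - 1 then - int i else x))"

definition word_prod :: "nat list \<Rightarrow> int \<Rightarrow> int" where
  "word_prod ws = foldr (\<lambda>i f. gen i \<circ> f) ws id"

definition len :: "nat \<Rightarrow> (int \<Rightarrow> int) \<Rightarrow> nat" where
  "len n w = (LEAST k. \<exists>ws. length ws = k \<and> set ws \<subseteq> {..<n} \<and> word_prod ws = w)"

definition reflections :: "nat \<Rightarrow> (int \<Rightarrow> int) set" where
  "reflections n = {u \<circ> gen s \<circ> inv u | u s. u \<in> Bn n \<and> s < n}"

definition inv_set :: "nat \<Rightarrow> (int \<Rightarrow> int) \<Rightarrow> (int \<Rightarrow> int) set" where
  "inv_set n w = {t \<in> reflections n. len n (t \<circ> w) < len n w}"

definition weak_le :: "nat \<Rightarrow> (int \<Rightarrow> int) \<Rightarrow> (int \<Rightarrow> int) \<Rightarrow> bool" where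
  "weak_le n v w \<longleftrightarrow> v \<in> Bn n \<and> w \<in> Bn n \<and> inv_set n v \<subseteq> inv_set n w"

definition weak_lt :: "nat \<Rightarrow> (int \<Rightarrow> int) \<Rightarrow> (int \<Rightarrow> int) \<Rightarrow> bool" where
  "weak_lt n v w \<longleftrightarrow> weak_le n v w \<and> v \<noteq> w"

definition covers :: "nat \<Rightarrow> (int \<Rightarrow> int) \<Rightarrow> (int \<Rightarrow> int) \<Rightarrow> bool" where
  "covers n w v \<longleftrightarrow> weak_lt n v w \<and> \<not> (\<exists>u. weak_lt n v u \<and> weak_lt n u w)"

definition join_irreducible :: "nat \<Rightarrow> (int \<Rightarrow> int) \<Rightarrow> bool" where
  "join_irreducible n w \<longleftrightarrow> w \<in> Bn n \<and> (\<exists>!v. covers n w v)"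

inductive_set gen_by :: "nat set \<Rightarrow> (int \<Rightarrow> int) set" for K where
  gen_by_id: "id \<in> gen_by K"
| gen_by_step: "x \<in> gen_by K \<Longrightarrow> i \<in> K \<Longrightarrow> gen i \<circ> x \<in> gen_by K"

definition deg :: "nat \<Rightarrow> (int \<Rightarrow> int) \<Rightarrow> nat" where
  "deg n g = (LEAST k. \<exists>K. K \<subseteq> {..<n} \<and> card K = k \<and> g \<in> gen_by K)"

definition signed_subset :: "nat \<Rightarrow> int set \<Rightarrow> bool" where
  "signed_subset n A \<longleftrightarrow> A \<subseteq> pm n \<and> (\<forall>i. \<not> {-i, i} \<subseteq> A)"

definition mA :: "int set \<Rightarrow> int" where
  "mA A = Min A"

definition MA :: "nat \<Rightarrow> int set \<Rightarrow> int" where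
  "MA n A = (if card A = n then - Min A else Max (pm n - (A \<union> uminus ` A)))"

text \<open>Full notation x_{-n},...,x_{-1},x_1,...,x_n: the values listed are
  -A increasing, then (\<plusminus>A)^c increasing, then A increasing.\<close>
definition gamma_list :: "nat \<Rightarrow> int set \<Rightarrow> int list" where
  "gamma_list n A = sorted_list_of_set (uminus ` A)
     @ sorted_list_of_set (pm n - (A \<union> uminus ` A)) @ sorted_list_of_set A"

definition pos_index :: "nat \<Rightarrow> int \<Rightarrow> nat" where
  "pos_index n i = (if i < 0 then nat (i + int n) else nat (i + int n - 1))"

definition gamma_of :: "nat \<Rightarrow> int set \<Rightarrow> int \<Rightarrow> int" where
  "gamma_of n A i = (if i \<in> pm n then gamma_list n A ! pos_index n i else i)"

end

theory Submission
  imports Defs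
begin


lemma gen_gen[simp]: "gen i (gen i x) = x"
  by (auto simp: gen_def)

lemma gen_odd: "gen i (-x) = - gen i x"
  by (auto simp: gen_def)

lemma pm_iff: "x \<in> pm n \<longleftrightarrow> 1 \<le> \<bar>x\<bar> \<and> \<bar>x\<bar> \<le> int n"
  by (simp add: pm_def)

lemma gen_fix: "i < n \<Longrightarrow> x \<notin> pm n \<Longrightarrow> gen i x = x"
  by (auto simp: gen_def pm_iff)

lemma gen_pm: "i < n \<Longrightarrow> x \<in> pm n \<Longrightarrow> gen i x \<in> pm n"
  by (auto simp: gen_def pm_iff)

lemma gen_gt: "i \<noteq> j \<Longrightarrow> (gen i x > int j) = (x > int j)"
  by (auto simp: gen_def)

lemma gen_Bn: "i < n \<Longrightarrow> gen i \<in> Bn n"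
proof -
  assume i: "i < n"
  have "inj_on (gen i) (pm n)" by (metis gen_gen inj_onI)
  moreover have "gen i ` pm n = pm n"
    using gen_pm[OF i] by (metis gen_gen image_eqI subsetI subset_antisym image_subsetI)
  ultimately show ?thesis using i gen_odd gen_fix unfolding Bn_def bij_betw_def by blast
qed

lemma id_Bn: "id \<in> Bn n"
  by (simp add: Bn_def)

lemma Bn_comp: "u \<in> Bn n \<Longrightarrow> w \<in> Bn n \<Longrightarrow> u \<circ> w \<in> Bn n"
  unfolding Bn_def using bij_betw_trans by fastforce

lemma gen_by_Bn: "w \<in> gen_by K \<Longrightarrow> K \<subseteq> {..<n} \<Longrightarrow> w \<in> Bn n"
  by (induction rule: gen_by.induct) (auto simp: id_Bn intro!: Bn_comp gen_Bn)

lemma gen_by_mono: "w \<in> gen_by K \<Longrightarrow> K \<subseteq> L \<Longrightarrow> w \<in> gen_by L"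
  by (induction rule: gen_by.induct) (auto intro: gen_by.intros)

lemma gen_by_comp: "u \<in> gen_by K \<Longrightarrow> w \<in> gen_by K \<Longrightarrow> u \<circ> w \<in> gen_by K"
  by (induction rule: gen_by.induct) (auto simp: comp_assoc intro: gen_by.intros)

lemma gen_gen_comp: "gen i \<circ> (gen i \<circ> f) = f"
  by (rule ext) simp

lemma gen_by_cancel: "u \<in> gen_by K \<Longrightarrow> u \<circ> w \<in> gen_by K \<Longrightarrow> w \<in> gen_by K"
proof (induction rule: gen_by.induct)
  case gen_by_id
  then show ?case by simp
next
  case (gen_by_step x i)
  have "gen i \<circ> ((gen i \<circ> x) \<circ> w) \<in> gen_by K"
    by (rule gen_by.gen_by_step[OF gen_by_step.prems gen_by_step.hyps(2)])
  then have "x \<circ> w \<in> gen_by K" by (simp add: comp_assoc gen_gen_comp)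
  then show ?case using gen_by_step by blast
qed

lemma gen_by_inv: "w \<in> gen_by K \<Longrightarrow> j \<notin> K \<Longrightarrow> (w x > int j) = (x > int j)"
proof (induction rule: gen_by.induct)
  case gen_by_id
  then show ?case by simp
next
  case (gen_by_step y i)
  then have "i \<noteq> j" by auto
  then show ?case using gen_by_step gen_gt[of i j "y x"] by simp
qed

lemma chain_up: "1 \<le> a \<Longrightarrow> a \<le> b \<Longrightarrow> \<exists>u \<in> gen_by {i. a \<le> i \<and> i < b}. u (int a) = int b"
proof (induction b)
  case 0
  then show ?case by simp
next
  case (Suc b)
  show ?case
  proof (cases "a = Suc b")
    case True
    then show ?thesis by (intro bexI[of _ id]) (auto intro: gen_by.intros)
  next
    case False
    then obtain u where u: "u \<in> gen_by {i. a \<le> i \<and> i < b}" "u (int a) = int b"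
      using Suc by auto
    have "u \<in> gen_by {i. a \<le> i \<and> i < Suc b}" by (rule gen_by_mono[OF u(1)]) auto
    then have "gen b \<circ> u \<in> gen_by {i. a \<le> i \<and> i < Suc b}"
      using False Suc.prems by (auto intro: gen_by.intros)
    moreover have "(gen b \<circ> u) (int a) = int (Suc b)"
      using u(2) Suc.prems False by (auto simp: gen_def)
    ultimately show ?thesis by blast
  qed
qed

lemma chain_down: "1 \<le> b \<Longrightarrow> b \<le> a \<Longrightarrow> \<exists>u \<in> gen_by {i. b \<le> i \<and> i < a}. u (- int a) = - int b"
proof (induction a)
  case 0
  then show ?case by simp
next
  case (Suc a)
  show ?case
  proof (cases "b = Suc a")
    case True
    then show ?thesis by (intro bexI[of _ id]) (auto intro: gen_by.intros)
  next
    case False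
    then obtain u where u: "u \<in> gen_by {i. b \<le> i \<and> i < a}" "u (- int a) = - int b"
      using Suc by auto
    have u2: "u \<in> gen_by {i. b \<le> i \<and> i < Suc a}" by (rule gen_by_mono[OF u(1)]) auto
    have g: "gen a \<circ> id \<in> gen_by {i. b \<le> i \<and> i < Suc a}"
      using False Suc.prems by (intro gen_by.gen_by_step gen_by.gen_by_id) auto
    have "u \<circ> (gen a \<circ> id) \<in> gen_by {i. b \<le> i \<and> i < Suc a}"
      by (rule gen_by_comp[OF u2 g])
    moreover have "(u \<circ> (gen a \<circ> id)) (- int (Suc a)) = - int b"
      using u(2) Suc.prems False by (auto simp: gen_def)
    ultimately show ?thesis by blast
  qed
qed


lemma Bn_fix: "w \<in> Bn n \<Longrightarrow> x \<notin> pm n \<Longrightarrow> w x = x"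
  by (simp add: Bn_def)

lemma Bn_odd: "w \<in> Bn n \<Longrightarrow> w (-x) = - w x"
  by (simp add: Bn_def)

lemma Bn_pm: "w \<in> Bn n \<Longrightarrow> x \<in> pm n \<Longrightarrow> w x \<in> pm n"
  unfolding Bn_def bij_betw_def by blast

lemma Bn_inj: "w \<in> Bn n \<Longrightarrow> x \<in> pm n \<Longrightarrow> y \<in> pm n \<Longrightarrow> w x = w y \<Longrightarrow> x = y"
  unfolding Bn_def bij_betw_def inj_on_def by blast

lemma Bn_surj: "w \<in> Bn n \<Longrightarrow> y \<in> pm n \<Longrightarrow> \<exists>x \<in> pm n. w x = y"
proof -
  assume "w \<in> Bn n" "y \<in> pm n"
  then have "y \<in> w ` pm n" by (simp add: Bn_def bij_betw_def)
  then show ?thesis by blast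
qed

lemma pm_Suc: "pm (Suc n) = pm n \<union> {int (Suc n), - int (Suc n)}"
  by (auto simp: pm_iff)

lemma Bn_restrict:
  assumes w: "w \<in> Bn (Suc n)" and f: "w (int (Suc n)) = int (Suc n)"
  shows "w \<in> Bn n"
proof -
  have f2: "w (- int (Suc n)) = - int (Suc n)" using Bn_odd[OF w, of "int (Suc n)"] f by simp
  have inj: "inj_on w (pm n)"
    using w unfolding Bn_def bij_betw_def by (auto simp: pm_Suc intro: inj_on_subset)
  have sub: "w ` pm n \<subseteq> pm n"
  proof
    fix y assume "y \<in> w ` pm n"
    then obtain x where x: "x \<in> pm n" "y = w x" by auto
    have "x \<in> pm (Suc n)" using x by (simp add: pm_Suc)
    then have "y \<in> pm (Suc n)" using Bn_pm[OF w] x by simp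
    moreover have "y \<noteq> int (Suc n)"
      using Bn_inj[OF w, of x "int (Suc n)"] f x by (auto simp: pm_Suc pm_iff)
    moreover have "y \<noteq> - int (Suc n)"
      using Bn_inj[OF w, of x "- int (Suc n)"] f2 x by (auto simp: pm_Suc pm_iff)
    ultimately show "y \<in> pm n" by (auto simp: pm_Suc)
  qed
  have sup: "pm n \<subseteq> w ` pm n"
  proof
    fix y assume y: "y \<in> pm n"
    then obtain x where x: "x \<in> pm (Suc n)" "w x = y" using Bn_surj[OF w, of y] by (auto simp: pm_Suc)
    have "x \<noteq> int (Suc n)" "x \<noteq> - int (Suc n)" using x f f2 y by (auto simp: pm_iff)
    then have "x \<in> pm n" using x by (auto simp: pm_Suc)
    then show "y \<in> w ` pm n" using x by auto
  qed
  have fx: "\<forall>i. i \<notin> pm n \<longrightarrow> w i = i"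
  proof (intro allI impI)
    fix i assume "i \<notin> pm n"
    then show "w i = i" using f f2 Bn_fix[OF w, of i] by (auto simp: pm_Suc)
  qed
  show ?thesis unfolding Bn_def bij_betw_def
    using inj sub sup fx Bn_odd[OF w] by auto
qed

lemma Bn_0: "w \<in> Bn 0 \<Longrightarrow> w = id"
proof (rule ext)
  fix x assume "w \<in> Bn 0"
  moreover have "x \<notin> pm 0" unfolding pm_iff by arith
  ultimately show "w x = id x" using Bn_fix[of w 0 x] by simp
qed

lemma parabolic:
  "w \<in> Bn n \<Longrightarrow> (\<forall>j<n. j \<notin> K \<longrightarrow> (\<forall>x. (w x > int j) = (x > int j))) \<Longrightarrow> w \<in> gen_by K"
proof (induction n arbitrary: w)
  case 0
  then show ?case using Bn_0 by (auto intro: gen_by.intros)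
next
  case (Suc n)
  define y where "y = w (int (Suc n))"
  have ypm: "y \<in> pm (Suc n)" unfolding y_def by (rule Bn_pm[OF Suc.prems(1)]) (simp add: pm_iff)
  have inK: "\<And>i. i \<le> n \<Longrightarrow> y \<le> int i \<Longrightarrow> i \<in> K"
  proof (rule ccontr)
    fix i assume i: "i \<le> n" "y \<le> int i" "i \<notin> K"
    then have "(w (int (Suc n)) > int i) = (int (Suc n) > int i)" using Suc.prems(2) by auto
    then show False using i unfolding y_def by auto
  qed
  obtain u where u: "u \<in> gen_by {i. i < Suc n \<and> i \<in> K}" "u y = int (Suc n)"
  proof (cases "y > 0")
    case True
    define a where "a = nat y"
    have a: "1 \<le> a" "a \<le> Suc n" "y = int a" using True ypm by (auto simp: a_def pm_iff)
    obtain u where "u \<in> gen_by {i. a \<le> i \<and> i < Suc n}" "u (int a) = int (Suc n)"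
      using chain_up[OF a(1) a(2)] by auto
    moreover have "{i. a \<le> i \<and> i < Suc n} \<subseteq> {i. i < Suc n \<and> i \<in> K}"
      using inK a by auto
    ultimately show ?thesis using that gen_by_mono a(3) by blast
  next
    case False
    define a where "a = nat (- y)"
    have a: "1 \<le> a" "a \<le> Suc n" "y = - int a" using False ypm by (auto simp: a_def pm_iff)
    have allK: "{i. i < Suc n} \<subseteq> {i. i < Suc n \<and> i \<in> K}" using inK False by auto
    obtain u1 where u1: "u1 \<in> gen_by {i. 1 \<le> i \<and> i < a}" "u1 (- int a) = - 1"
      using chain_down[of 1 a] a(1) by auto
    obtain u2 where u2: "u2 \<in> gen_by {i. 1 \<le> i \<and> i < Suc n}" "u2 1 = int (Suc n)"
      using chain_up[of 1 "Suc n"] by auto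
    have g0: "gen 0 \<circ> u1 \<in> gen_by {i. i < Suc n}"
      by (rule gen_by.gen_by_step[OF gen_by_mono[OF u1(1)]]) (use a in auto)
    have "u2 \<circ> (gen 0 \<circ> u1) \<in> gen_by {i. i < Suc n}"
      by (rule gen_by_comp[OF gen_by_mono[OF u2(1)] g0]) auto
    moreover have "(u2 \<circ> (gen 0 \<circ> u1)) y = int (Suc n)"
      using u1(2) u2(2) a(3) by (simp add: gen_def)
    ultimately show ?thesis using that gen_by_mono[OF _ allK] by blast
  qed
  have uB: "u \<in> Bn (Suc n)" by (rule gen_by_Bn[OF u(1)]) auto
  have uK: "u \<in> gen_by K" by (rule gen_by_mono[OF u(1)]) auto
  have vB: "u \<circ> w \<in> Bn (Suc n)" by (rule Bn_comp[OF uB Suc.prems(1)])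
  have vf: "(u \<circ> w) (int (Suc n)) = int (Suc n)" using u(2) y_def by simp
  have vBn: "u \<circ> w \<in> Bn n" by (rule Bn_restrict[OF vB vf])
  have "\<forall>j<n. j \<notin> K \<longrightarrow> (\<forall>x. ((u \<circ> w) x > int j) = (x > int j))"
    using Suc.prems(2) gen_by_inv[OF uK] by simp
  then have "u \<circ> w \<in> gen_by K" using Suc.IH[OF vBn] by blast
  then show ?case by (rule gen_by_cancel[OF uK])
qed

definition preserves :: "(int \<Rightarrow> int) \<Rightarrow> nat \<Rightarrow> bool" where
  "preserves w j \<longleftrightarrow> (\<forall>x. (w x > int j) = (x > int j))"

lemma deg_eq:
  assumes w: "w \<in> Bn n"
  shows "deg n w = card {j. j < n \<and> \<not> preserves w j}"
proof -
  define J where "J = {j. j < n \<and> \<not> preserves w j}"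
  have J: "J \<subseteq> {..<n}" "w \<in> gen_by J"
    using parabolic[OF w, of J] unfolding J_def preserves_def by auto
  have min: "card J \<le> card K" if "K \<subseteq> {..<n}" "w \<in> gen_by K" for K
  proof -
    have "J \<subseteq> K" using gen_by_inv[OF that(2)] unfolding J_def preserves_def by blast
    then show ?thesis using that(1) by (meson card_mono finite_lessThan finite_subset)
  qed
  show ?thesis unfolding deg_def J_def[symmetric]
    by (rule Least_equality) (use J min in auto)
qed



lemma sls_append:
  fixes S T :: "int set"
  assumes "finite S" "finite T" "\<forall>x\<in>S. \<forall>y\<in>T. x < y"
  shows "sorted_list_of_set (S \<union> T) = sorted_list_of_set S @ sorted_list_of_set T"
proof -
  have d: "S \<inter> T = {}" using assms(3) by fastforce
  have "sorted_wrt (<) (sorted_list_of_set S @ sorted_list_of_set T) \<and>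
        set (sorted_list_of_set S @ sorted_list_of_set T) = S \<union> T \<and>
        length (sorted_list_of_set S @ sorted_list_of_set T) = card (S \<union> T)"
    using assms d by (auto simp: sorted_wrt_append card_Un_disjoint)
  then show ?thesis
    using sorted_list_of_set_unique[of "S \<union> T" "sorted_list_of_set S @ sorted_list_of_set T"] assms by blast
qed

lemma finite_pm: "finite (pm n)"
  by (rule finite_subset[of _ "{- int n..int n}"]) (auto simp: pm_iff)

lemma card_pm: "card (pm n) = 2 * n"
proof -
  have "pm n = {- int n..-1} \<union> {1..int n}" by (auto simp: pm_iff)
  moreover have "card ({- int n..-1} \<union> {1..int n}) = n + n"
    by (subst card_Un_disjoint) auto
  ultimately show ?thesis by simp
qed

locale GS =
  fixes n :: nat and A :: "int set"
  assumes ss: "signed_subset n A" and ne: "A \<noteq> {}"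
begin

definition "k = card A"
definition "C = pm n - (A \<union> uminus ` A)"
definition "Cp = {x \<in> C. x > 0}"
definition "Cn = {x \<in> C. x < 0}"

lemma A_pm: "A \<subseteq> pm n" using ss by (simp add: signed_subset_def)
lemma finA: "finite A" using A_pm finite_pm finite_subset by blast
lemma nA_pm: "uminus ` A \<subseteq> pm n" using A_pm by (auto simp: pm_iff)
lemma disj: "A \<inter> uminus ` A = {}"
  using ss unfolding signed_subset_def by fastforce
lemma card_nA: "card (uminus ` A) = k"
  unfolding k_def by (rule card_image) (simp add: inj_on_def)
lemma finC: "finite C" unfolding C_def using finite_pm by simp
lemma card_C: "card C = 2 * n - 2 * k"
proof -
  have "card (A \<union> uminus ` A) = 2 * k"
    using card_Un_disjoint[OF finA _ disj] finA card_nA k_def by simp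
  then show ?thesis unfolding C_def
    using card_Diff_subset[of "A \<union> uminus ` A" "pm n"] finA A_pm nA_pm card_pm by simp
qed
lemma k_le: "k \<le> n"
proof -
  have "card (A \<union> uminus ` A) = 2 * k"
    using card_Un_disjoint[OF finA _ disj] finA card_nA k_def by simp
  moreover have "card (A \<union> uminus ` A) \<le> card (pm n)"
    using A_pm nA_pm finite_pm by (intro card_mono) auto
  ultimately show ?thesis using card_pm by simp
qed
lemma C_sym: "x \<in> C \<longleftrightarrow> - x \<in> C"
  unfolding C_def by (auto simp: pm_iff image_iff)
lemma C_nz: "x \<in> C \<Longrightarrow> x \<noteq> 0" unfolding C_def by (auto simp: pm_iff)
lemma C_split: "C = Cn \<union> Cp" unfolding Cn_def Cp_def using C_nz by fastforce
lemma Cn_img: "Cn = uminus ` Cp"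
  unfolding Cn_def Cp_def using C_sym by (auto simp: image_iff) (metis minus_minus neg_0_less_iff_less)
lemma card_Cp: "card Cp = n - k"
proof -
  have fin: "finite Cp" "finite Cn" unfolding Cp_def Cn_def using finC by auto
  have "card Cn = card Cp" unfolding Cn_img by (rule card_image) (simp add: inj_on_def)
  moreover have "card C = card Cn + card Cp"
    unfolding C_split by (rule card_Un_disjoint) (use fin in \<open>auto simp: Cn_def Cp_def\<close>)
  ultimately show ?thesis using card_C by simp
qed
lemma card_Cn: "card Cn = n - k"
  using card_Cp unfolding Cn_img by (subst card_image) (auto simp: inj_on_def)

lemma sorted_C: "sorted_list_of_set C = sorted_list_of_set Cn @ sorted_list_of_set Cp"
  unfolding C_split
  by (rule sls_append) (use finC in \<open>auto simp: Cn_def Cp_def\<close>)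

lemma gamma_list_eq: "gamma_list n A = sorted_list_of_set (uminus ` A) @ sorted_list_of_set Cn
    @ sorted_list_of_set Cp @ sorted_list_of_set A"
  unfolding gamma_list_def C_def[symmetric] sorted_C by simp

lemma gamma_pos:
  assumes p: "1 \<le> p" "p \<le> int n"
  shows "gamma_of n A p = (sorted_list_of_set Cp @ sorted_list_of_set A) ! nat (p - 1)"
proof -
  have pm: "p \<in> pm n" using p by (simp add: pm_iff)
  have pi: "pos_index n p = k + (n - k) + nat (p - 1)" using p k_le by (simp add: pos_index_def)
  have l1: "length (sorted_list_of_set (uminus ` A)) = k" using card_nA finA by simp
  have l2: "length (sorted_list_of_set Cn) = n - k" using card_Cn by simp
  have l0: "length (sorted_list_of_set (uminus ` A) @ sorted_list_of_set Cn) = k + (n - k)"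
    using l1 l2 by simp
  have ge: "gamma_list n A = (sorted_list_of_set (uminus ` A) @ sorted_list_of_set Cn) @
     (sorted_list_of_set Cp @ sorted_list_of_set A)" by (simp add: gamma_list_eq)
  have "gamma_list n A ! pos_index n p = (sorted_list_of_set Cp @ sorted_list_of_set A) ! nat (p - 1)"
    unfolding ge pi l0[symmetric] by (rule nth_append_length_plus)
  then show ?thesis unfolding gamma_of_def using pm by simp
qed

lemma gamma_pos1:
  assumes p: "1 \<le> p" "p \<le> int n - int k"
  shows "gamma_of n A p = sorted_list_of_set Cp ! nat (p - 1)"
proof -
  have "length (sorted_list_of_set Cp) = n - k" using card_Cp by simp
  then show ?thesis using gamma_pos[of p] p k_le by (simp add: nth_append)
qed

lemma gamma_pos2:
  assumes p: "int n - int k < p" "p \<le> int n"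
  shows "gamma_of n A p = sorted_list_of_set A ! nat (p - (int n - int k) - 1)"
proof -
  have "length (sorted_list_of_set Cp) = n - k" using card_Cp by simp
  moreover have "nat (p - 1) - (n - k) = nat (p - (int n - int k) - 1)" using p k_le by simp
  moreover have "\<not> nat (p - 1) < n - k" using p by simp
  ultimately show ?thesis using gamma_pos[of p] p k_le by (simp add: nth_append)
qed

end


lemma preserves_fix_high:
  assumes w: "w \<in> Bn n" and fx: "\<And>x. int j < x \<Longrightarrow> x \<le> int n \<Longrightarrow> w x = x"
  shows "preserves w j"
  unfolding preserves_def
proof
  fix x
  show "(w x > int j) = (x > int j)"
  proof (cases "x \<in> pm n")
    case False
    then show ?thesis using Bn_fix[OF w] by simp
  next
    case True
    then have xn: "x \<le> int n" unfolding pm_iff by arith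
    show ?thesis
    proof (cases "x > int j")
      case True
      then show ?thesis using fx xn by simp
    next
      case False
      have wx: "w x \<in> pm n" using Bn_pm[OF w True] .
      have "\<not> w x > int j"
      proof
        assume h: "w x > int j"
        then have "w (w x) = w x" using fx wx by (simp add: pm_iff)
        then have "w x = x" using Bn_inj[OF w wx True] by simp
        then show False using h False by simp
      qed
      then show ?thesis using False by simp
    qed
  qed
qed

lemma preserves_fix_low:
  assumes w: "w \<in> Bn n" and fx: "\<And>x. 1 \<le> x \<Longrightarrow> x \<le> int j \<Longrightarrow> w x = x"
    and pos: "\<And>x. 1 \<le> x \<Longrightarrow> x \<le> int n \<Longrightarrow> w x > 0"
  shows "preserves w j"
  unfolding preserves_def
proof
  fix x
  show "(w x > int j) = (x > int j)"
  proof (cases "x \<in> pm n")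
    case False
    then show ?thesis using Bn_fix[OF w] by simp
  next
    case True
    show ?thesis
    proof (cases "x > int j")
      case xj: True
      then have x1: "1 \<le> x" "x \<le> int n" using True by (auto simp: pm_iff)
      have "\<not> w x \<le> int j"
      proof
        assume h: "w x \<le> int j"
        have "w x > 0" using pos x1 by simp
        then have "w (w x) = w x" using fx h by simp
        moreover have "w x \<in> pm n" using Bn_pm[OF w True] .
        ultimately have "w x = x" using Bn_inj[OF w _ True] by simp
        then show False using h xj by simp
      qed
      then show ?thesis using xj by simp
    next
      case xj: False
      show ?thesis
      proof (cases "x > 0")
        case True
        then show ?thesis using fx xj by simp
      next
        case False
        then have "-x \<ge> 1" "-x \<le> int n" using \<open>x \<in> pm n\<close> by (auto simp: pm_iff)
        then have "w (-x) > 0" using pos by simp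
        then have "w x < 0" using Bn_odd[OF w, of x] by simp
        then show ?thesis using xj by simp
      qed
    qed
  qed
qed

context GS
begin

lemma m_in: "Min A \<in> A" using finA ne by simp
lemma m_pm: "Min A \<in> pm n" using m_in A_pm by auto

lemma g_p1: "gamma_of n A (int n - int k + 1) = Min A"
proof -
  have "1 \<le> k" using finA ne k_def by (simp add: Suc_le_eq card_gt_0_iff)
  then have "gamma_of n A (int n - int k + 1) = sorted_list_of_set A ! 0"
    using gamma_pos2[of "int n - int k + 1"] k_le by simp
  then show ?thesis using sorted_list_of_set_nonempty[OF finA ne] by simp
qed

lemma Cp_fin: "finite Cp" unfolding Cp_def using finC by simp

lemma MaxC:
  assumes "k < n"
  shows "Max C = Max Cp" "Max Cp \<in> Cp" "MA n A = Max Cp"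
proof -
  have ne: "Cp \<noteq> {}" using card_Cp assms by auto
  show mx: "Max Cp \<in> Cp" using Cp_fin ne by simp
  show eq: "Max C = Max Cp"
  proof (rule Max_eqI[OF finC])
    fix y assume y: "y \<in> C"
    then have "\<bar>y\<bar> \<in> Cp" using C_sym C_nz[OF y] unfolding Cp_def by (cases "y > 0") auto
    then have "\<bar>y\<bar> \<le> Max Cp" using Cp_fin by simp
    then show "y \<le> Max Cp" by simp
  next
    show "Max Cp \<in> C" using mx unfolding Cp_def by simp
  qed
  show "MA n A = Max Cp" using assms eq unfolding MA_def C_def[symmetric] k_def by simp
qed

lemma g_p0:
  assumes "k < n"
  shows "gamma_of n A (int n - int k) = MA n A"
proof -
  define mx where "mx = Max Cp"
  have mx: "mx \<in> Cp" using MaxC[OF assms] mx_def by simp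
  have "Cp = (Cp - {mx}) \<union> {mx}" using mx by auto
  moreover have "sorted_list_of_set (Cp - {mx} \<union> {mx}) = sorted_list_of_set (Cp - {mx}) @ sorted_list_of_set {mx}"
  proof (rule sls_append)
    show "\<forall>x\<in>Cp - {mx}. \<forall>y\<in>{mx}. x < y"
      using Max_ge[OF Cp_fin] mx_def by fastforce
  qed (use Cp_fin in auto)
  ultimately have "sorted_list_of_set Cp = sorted_list_of_set (Cp - {mx}) @ [mx]" by simp
  moreover have "length (sorted_list_of_set (Cp - {mx})) = n - k - 1"
    using card_Cp mx Cp_fin by simp
  ultimately have "sorted_list_of_set Cp ! (n - k - 1) = mx" by (simp add: nth_append)
  moreover have "nat (int n - int k - 1) = n - k - 1" using assms by simp
  ultimately show ?thesis using gamma_pos1[of "int n - int k"] assms MaxC[OF assms] mx_def by simp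
qed

lemma kn: "k = n \<Longrightarrow> MA n A = - Min A \<and> C = {}"
  using card_C finC unfolding MA_def k_def by auto

end


context GS
begin

lemma M_bounds:
  assumes "MA n A > Min A"
  shows "1 \<le> MA n A" "MA n A \<le> int n"
proof -
  have "1 \<le> MA n A \<and> MA n A \<le> int n"
  proof (cases "k < n")
    case True
    then have "MA n A \<in> Cp" using MaxC by simp
    then have "MA n A \<in> pm n" "MA n A > 0" unfolding Cp_def C_def by auto
    then show ?thesis unfolding pm_iff by arith
  next
    case False
    then have "k = n" using k_le by simp
    then show ?thesis using kn assms m_pm unfolding pm_iff by auto
  qed
  then show "1 \<le> MA n A" "MA n A \<le> int n" by auto
qed

lemma lower:
  assumes g: "gamma_of n A \<in> Bn n" and mM: "MA n A > Min A"
    and j: "(Min A \<le> int j \<and> int j < MA n A) \<or> int j < - Min A"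
  shows "\<not> preserves (gamma_of n A) j"
proof -
  have p0': "gamma_of n A (- (int n - int k + 1)) = - Min A"
    using Bn_odd[OF g, of "int n - int k + 1"] g_p1 by simp
  have "\<exists>x. (gamma_of n A x > int j) \<noteq> (x > int j)"
  proof (cases "int j < - Min A")
    case True
    then show ?thesis using p0' k_le by (intro exI[of _ "- (int n - int k + 1)"]) simp
  next
    case False
    then have j2: "Min A \<le> int j" "int j < MA n A" using j by auto
    show ?thesis
    proof (cases "int n - int k + 1 > int j")
      case True
      then show ?thesis using g_p1 j2 by (intro exI[of _ "int n - int k + 1"]) simp
    next
      case c2: False
      show ?thesis
      proof (cases "k < n")
        case True
        then show ?thesis using g_p0[OF True] j2 c2 by (intro exI[of _ "int n - int k"]) simp
      next
        case False
        then have "k = n" using k_le by simp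
        then show ?thesis using kn p0' j2 by (intro exI[of _ "- (int n - int k + 1)"]) simp
      qed
    qed
  qed
  then show ?thesis unfolding preserves_def by blast
qed

lemma P2a:
  assumes g: "gamma_of n A \<in> Bn n" and jM: "MA n A \<le> int j" and jm: "- Min A \<le> int j"
  shows "preserves (gamma_of n A) j"
proof (rule preserves_fix_high[OF g])
  fix x assume x: "int j < x" "x \<le> int n"
  define T where "T = {int j + 1..int n}"
  define A1 where "A1 = {a \<in> A. a \<le> int j}"
  have TA: "T \<subseteq> A"
  proof
    fix y assume y: "y \<in> T"
    have ypm: "y \<in> pm n" using y unfolding T_def pm_iff by auto
    have "y \<notin> C"
    proof (cases "k < n")
      case True
      then have "Max C = MA n A" using MaxC by simp
      then show ?thesis using Max_ge[OF finC, of y] jM y unfolding T_def by auto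
    next
      case False
      then show ?thesis using kn k_le by simp
    qed
    moreover have "- y \<notin> A"
    proof
      assume "- y \<in> A"
      then have "Min A \<le> - y" using finA by simp
      then show False using jm y unfolding T_def by simp
    qed
    ultimately show "y \<in> A" using ypm unfolding C_def by (auto simp: image_iff)
  qed
  have "\<And>a. a \<in> A \<Longrightarrow> a \<le> int n"
  proof -
    fix a assume "a \<in> A"
    then have "a \<in> pm n" using A_pm by auto
    then show "a \<le> int n" unfolding pm_iff by arith
  qed
  then have AU: "A = A1 \<union> T" using TA unfolding A1_def T_def by force
  have fin1: "finite A1" unfolding A1_def using finA by simp
  have sA: "sorted_list_of_set A = sorted_list_of_set A1 @ [int j + 1..int n]"
    unfolding AU by (subst sls_append) (use fin1 in \<open>auto simp: A1_def T_def\<close>)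
  have cT: "card T = n - j" unfolding T_def by simp
  have "card (A1 \<union> T) = card A1 + card T"
    using fin1 by (subst card_Un_disjoint) (auto simp: A1_def T_def)
  then have cA: "k = card A1 + (n - j)"
    using cT AU k_def by simp
  have jn: "j < n" using x by simp
  have xk: "int n - int k < x" using cA x jn by simp
  have l1: "length (sorted_list_of_set A1) = card A1" by simp
  have idx: "nat (x - (int n - int k) - 1) = card A1 + nat (x - int j - 1)"
    using cA x jn by simp
  have "gamma_of n A x = [int j + 1..int n] ! nat (x - int j - 1)"
    using gamma_pos2[OF xk x(2)] unfolding sA idx l1[symmetric] by (simp only: nth_append_length_plus)
  also have "\<dots> = x" using x by (subst nth_upto) auto
  finally show "gamma_of n A x = x" .
qed

lemma P2b:
  assumes g: "gamma_of n A \<in> Bn n" and m0: "0 < Min A" and jm: "int j < Min A"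
  shows "preserves (gamma_of n A) j"
proof (rule preserves_fix_low[OF g])
  have Apos: "\<And>a. a \<in> A \<Longrightarrow> a \<ge> Min A" using finA by simp
  define T where "T = {1..int j}"
  define C1 where "C1 = {c \<in> Cp. c > int j}"
  have TC: "T \<subseteq> Cp"
  proof
    fix y assume y: "y \<in> T"
    have "y \<in> pm n" using y m_pm jm unfolding T_def pm_iff by auto
    moreover have "y \<notin> A" using Apos y jm unfolding T_def by force
    moreover have "-y \<notin> A" using Apos y m0 unfolding T_def by force
    ultimately show "y \<in> Cp" using y unfolding Cp_def C_def T_def by (auto simp: image_iff)
  qed
  have CU: "Cp = T \<union> C1" using TC unfolding C1_def T_def Cp_def by auto
  have fin1: "finite C1" unfolding C1_def using Cp_fin by simp
  have sC: "sorted_list_of_set Cp = [1..int j] @ sorted_list_of_set C1"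
    unfolding CU by (subst sls_append) (use fin1 in \<open>auto simp: C1_def T_def\<close>)
  have cj: "j \<le> n - k"
  proof -
    have "card T \<le> card Cp" using TC Cp_fin by (intro card_mono)
    then show ?thesis using card_Cp unfolding T_def by simp
  qed
  fix x assume x: "1 \<le> x" "x \<le> int j"
  have "gamma_of n A x = sorted_list_of_set Cp ! nat (x - 1)"
    using gamma_pos1[of x] x cj by simp
  also have "\<dots> = x" unfolding sC using x by (simp add: nth_append nat_less_iff)
  finally show "gamma_of n A x = x" .
next
  fix x assume x: "1 \<le> x" "x \<le> int n"
  show "gamma_of n A x > 0"
  proof (cases "x \<le> int n - int k")
    case True
    have "nat (x - 1) < length (sorted_list_of_set Cp)" using card_Cp True x by simp
    then have "sorted_list_of_set Cp ! nat (x - 1) \<in> Cp" using Cp_fin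
      by (metis nth_mem set_sorted_list_of_set)
    then show ?thesis using gamma_pos1[of x] x True unfolding Cp_def by simp
  next
    case False
    have "nat (x - (int n - int k) - 1) < length (sorted_list_of_set A)"
      using False x k_def finA by simp
    then have "sorted_list_of_set A ! nat (x - (int n - int k) - 1) \<in> A" using finA
      by (metis nth_mem set_sorted_list_of_set)
    then have "sorted_list_of_set A ! nat (x - (int n - int k) - 1) \<ge> Min A" using finA by simp
    then show ?thesis using gamma_pos2[of x] x False m0 by simp
  qed
qed

end


context GS
begin

lemma J_eq:
  assumes g: "gamma_of n A \<in> Bn n" and mM: "MA n A > Min A"
  shows "{j. j < n \<and> \<not> preserves (gamma_of n A) j}
       = {j. j < n \<and> ((Min A \<le> int j \<and> int j < MA n A) \<or> int j < - Min A)}"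
proof -
  have "\<not> preserves (gamma_of n A) j \<longleftrightarrow> ((Min A \<le> int j \<and> int j < MA n A) \<or> int j < - Min A)" for j
  proof
    assume "\<not> preserves (gamma_of n A) j"
    then show "(Min A \<le> int j \<and> int j < MA n A) \<or> int j < - Min A"
      using P2a[OF g, of j] P2b[OF g, of j] by force
  next
    assume "(Min A \<le> int j \<and> int j < MA n A) \<or> int j < - Min A"
    then show "\<not> preserves (gamma_of n A) j" using lower[OF g mM] by blast
  qed
  then show ?thesis by blast
qed

lemma main:
  assumes g: "gamma_of n A \<in> Bn n" and mM: "MA n A > Min A"
  shows "int (deg n (gamma_of n A)) = (if Min A > 0 then MA n A - Min A else max (MA n A) (- Min A))"
    "int (card {i \<in> pm n. Min A < i \<and> i < MA n A}) = (if Min A > 0 then MA n A - Min A - 1 else MA n A - Min A - 2)"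
proof -
  have Mb: "1 \<le> MA n A" "MA n A \<le> int n" using M_bounds[OF mM] by auto
  have mb: "Min A \<noteq> 0" "- int n \<le> Min A" "Min A \<le> int n" using m_pm unfolding pm_iff by auto
  have d: "deg n (gamma_of n A) = card {j. j < n \<and> ((Min A \<le> int j \<and> int j < MA n A) \<or> int j < - Min A)}"
    using deg_eq[OF g] J_eq[OF g mM] by simp
  show "int (deg n (gamma_of n A)) = (if Min A > 0 then MA n A - Min A else max (MA n A) (- Min A))"
  proof (cases "Min A > 0")
    case True
    have "{j. j < n \<and> ((Min A \<le> int j \<and> int j < MA n A) \<or> int j < - Min A)} = {nat (Min A)..<nat (MA n A)}"
      using True Mb by auto
    then show ?thesis using d True Mb mM by simp
  next
    case False
    have "{j. j < n \<and> ((Min A \<le> int j \<and> int j < MA n A) \<or> int j < - Min A)} = {..<nat (max (MA n A) (- Min A))}"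
      using False Mb mb by auto
    then show ?thesis using d False Mb mb by simp
  qed
  show "int (card {i \<in> pm n. Min A < i \<and> i < MA n A}) = (if Min A > 0 then MA n A - Min A - 1 else MA n A - Min A - 2)"
  proof (cases "Min A > 0")
    case True
    have "{i \<in> pm n. Min A < i \<and> i < MA n A} = {Min A<..<MA n A}"
      using True Mb unfolding pm_iff by auto
    then show ?thesis using True mM by simp
  next
    case False
    have "{i \<in> pm n. Min A < i \<and> i < MA n A} = {Min A<..<MA n A} - {0}"
      using False Mb mb unfolding pm_iff by auto
    moreover have "0 \<in> {Min A<..<MA n A}" using False mb Mb by auto
    ultimately show ?thesis using False mM Mb by (simp add: card_Diff_singleton)
  qed
qed

end

theorem lemma3p7:
  fixes n :: nat and A :: "int set" and \<gamma> :: "int \<Rightarrow> int"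
  assumes "join_irreducible n \<gamma>"
    and "signed_subset n A" and "A \<noteq> {}" and "MA n A > mA A"
    and "\<gamma> = gamma_of n A"
  shows "(deg n \<gamma> = 1 \<longleftrightarrow> card {i \<in> pm n. mA A < i \<and> i < MA n A} = 0)
       \<and> (deg n \<gamma> = 2 \<longleftrightarrow> card {i \<in> pm n. mA A < i \<and> i < MA n A} = 1
                           \<or> (mA A = -2 \<and> MA n A = 2))"
proof -
  interpret GS n A using assms(2,3) by unfold_locales
  have g: "gamma_of n A \<in> Bn n" using assms(1,5) unfolding join_irreducible_def by simp
  have mM: "MA n A > Min A" using assms(4) unfolding mA_def by simp
  note h = main[OF g mM]
  have Mb: "1 \<le> MA n A" using M_bounds[OF mM] by auto
  have mb: "Min A \<noteq> 0" using m_pm unfolding pm_iff by auto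
  define d where "d = deg n \<gamma>"
  define c where "c = card {i \<in> pm n. mA A < i \<and> i < MA n A}"
  have hd: "int d = (if Min A > 0 then MA n A - Min A else max (MA n A) (- Min A))"
    using h(1) assms(5) d_def by simp
  have hc: "int c = (if Min A > 0 then MA n A - Min A - 1 else MA n A - Min A - 2)"
    using h(2) c_def unfolding mA_def by simp
  have "(d = 1 \<longleftrightarrow> c = 0) \<and> (d = 2 \<longleftrightarrow> c = 1 \<or> (Min A = -2 \<and> MA n A = 2))"
  proof (cases "Min A > 0")
    case True
    then show ?thesis using hd hc mM by auto
  next
    case False
    then show ?thesis using hd hc mM Mb mb by (auto simp: max_def split: if_splits)
  qed
  then show ?thesis unfolding d_def c_def mA_def by simp
qed


end
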